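(* Let $F(x)=\frac{1-x-\sqrt{1-2x-3x^2}}{2x^2}$ be the generating function of the Motzkin numbers. Then for all $n\in\mathbb{N}$: $D_{2,-1}(n)=1$ if $n\equiv0\pmod 4$, $0$ if $n\equiv1,3\pmod4$, $-1$ if $n\equiv2\pmod4$; $D_{2,-2}(n)=1$ if $n\equiv0,9,10,11\pmod{12}$, $0$ if $n\equiv1,2,7,8\pmod{12}$, $-1$ if $n\equiv3,4,5,6\pmod{12}$. Moreover, for $n\ge4$: $D_{2,-3}(n)=1$ if $n\equiv0,4\pmod{12}$; $0$ if $n\equiv2,8\pmod{12}$; $-1$ if $n\equiv6,10\pmod{12}$; and, writing $k=\lfloor n/12\rfloor$, $D_{2,-3}(12k+1)=8k$, $D_{2,-3}(12k+3)=-8k$, $D_{2,-3}(12k+5)=8k+2$, $D_{2,-3}(12k+7)=-8k-4$, $D_{2,-3}(12k+9)=8k+4$, $D_{2,-3}(12k+11)=-8k-6$.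
   Context: For a power series $F(x)=\sum_{n\ge0}a_nx^n$ and $K\ge1$, write $F(x)^K=\sum_{n\ge0}a_{K,n}x^n$ and set $a_{K,n}=0$ for $n<0$. For $M\in\mathbb{Z}$ and $K,N\in\mathbb{N}$ with $K\ge1$, define the shifted Hankel determinant $D_{K,M}(N)=\det(a_{K,i+j+M})_{i,j=0}^{N-1}$, with $D_{K,M}(0)=1$. $\mathbb{N}=\{0,1,2,\dots\}$. *)

theory Defs
  imports "HOL-Computational_Algebra.Formal_Power_Series" "Jordan_Normal_Form.Determinant"
begin

text \<open>The square root of 1 - 2x - 3x^2 with constant term 1 (formal power series over the rationals).\<close>
definition motzkin_sqrt :: "rat fps" where
  "motzkin_sqrt = fps_radical (\<lambda>_ _. 1) 2 (1 - 2 * fps_X - 3 * fps_X ^ 2)"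

definition motzkin_F :: "rat fps" where
  "motzkin_F = (1 - fps_X - motzkin_sqrt) / (2 * fps_X ^ 2)"

definition powcoeff :: "'a::comm_ring_1 fps \<Rightarrow> nat \<Rightarrow> int \<Rightarrow> 'a" where
  "powcoeff F K n = (if n < 0 then 0 else fps_nth (F ^ K) (nat n))"

text \<open>Shifted Hankel determinant D_{K,M}(N) = det (a_{K,i+j+M})_{i,j=0}^{N-1}; the empty determinant is 1.\<close>
definition hankelD :: "'a::comm_ring_1 fps \<Rightarrow> nat \<Rightarrow> int \<Rightarrow> nat \<Rightarrow> 'a" where
  "hankelD F K M N = det (mat N N (\<lambda>(i, j). powcoeff F K (int i + int j + M)))"

end

theory Submission
  imports Defs
begin


lemma S_sq: "motzkin_sqrt ^ 2 = 1 - 2 * fps_X - 3 * fps_X ^ 2"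
proof -
  have "(fps_radical (\<lambda>_ _. 1::rat) (Suc 1) (1 - 2 * fps_X - 3 * fps_X ^ 2)) ^ Suc 1 = 1 - 2 * fps_X - 3 * fps_X ^ 2"
    by (subst power_radical[symmetric]) (simp_all)
  thus ?thesis by (simp add: motzkin_sqrt_def numeral_2_eq_2)
qed

lemma S0: "fps_nth motzkin_sqrt 0 = 1" by (simp add: motzkin_sqrt_def)

lemma S1: "fps_nth motzkin_sqrt 1 = -1"
proof -
  have "fps_nth (motzkin_sqrt ^ 2) 1 = -2" by (simp add: S_sq)
  moreover have "fps_nth (motzkin_sqrt ^ 2) 1 = 2 * fps_nth motzkin_sqrt 1"
    by (simp add: fps_square_nth S0)
  ultimately show ?thesis by simp
qed

lemma F_eq: "(2 * fps_X ^ 2) * motzkin_F = 1 - fps_X - motzkin_sqrt"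
proof -
  define N where "N = 1 - fps_X - motzkin_sqrt"
  have "2 \<le> subdegree N \<or> N = 0"
  proof (cases "N = 0")
    case False
    have "fps_nth N 0 = 0" "fps_nth N 1 = 0" using S1 by (simp_all add: N_def S0)
    hence "\<forall>i<2. fps_nth N i = 0" using less_2_cases by auto
    thus ?thesis using False by (meson not_le nth_subdegree_nonzero dual_order.strict_trans)
  qed simp
  hence "N = fps_shift 2 N * fps_X ^ 2" using fps_shift_times_fps_X_power by fastforce
  hence N2: "N = (2 * fps_X ^ 2) * (fps_const (1/2) * fps_shift 2 N)"
  proof -
    have h: "(2::rat fps) * fps_const (1/2) = 1" by (simp add: numeral_fps_const fps_const_mult[symmetric])
    have "(2 * fps_X ^ 2) * (fps_const (1/2) * fps_shift 2 N) = ((2::rat fps) * fps_const (1/2)) * (fps_shift 2 N * fps_X ^ 2)"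
      by (simp add: algebra_simps)
    thus ?thesis using h \<open>N = fps_shift 2 N * fps_X ^ 2\<close> by simp
  qed
  have nz: "(2 * fps_X ^ 2 :: rat fps) \<noteq> 0" by simp
  have "motzkin_F = N / (2 * fps_X ^ 2)" by (simp add: motzkin_F_def N_def)
  also have "\<dots> = fps_const (1/2) * fps_shift 2 N" by (subst N2, rule nonzero_mult_div_cancel_left[OF nz])
  finally show ?thesis using N2 N_def by simp
qed

lemma F_func: "motzkin_F = 1 + fps_X * motzkin_F + fps_X ^ 2 * motzkin_F ^ 2"
proof -
  let ?F = motzkin_F and ?X = "fps_X :: rat fps"
  have "motzkin_sqrt = 1 - ?X - 2 * ?X^2 * ?F" using F_eq by (simp add: algebra_simps)
  hence "(1 - ?X - 2 * ?X^2 * ?F)^2 = 1 - 2 * ?X - 3 * ?X ^ 2" using S_sq by simp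
  hence "(4 * ?X^2) * (1 + ?X * ?F + ?X^2 * ?F^2 - ?F) = 0"
    by (simp add: algebra_simps power2_eq_square numeral_eq_Suc)
  moreover have "(4 * ?X^2) \<noteq> 0" by simp
  ultimately show ?thesis by simp
qed


definition Lt :: "nat \<Rightarrow> nat \<Rightarrow> rat" where
  "Lt n k = fps_nth (fps_X ^ k * motzkin_F ^ (Suc k)) n"

lemma F0: "fps_nth motzkin_F 0 = 1"
  using arg_cong[OF F_func, of "\<lambda>f. fps_nth f 0"] by simp

lemma Lt_zero: "n < k \<Longrightarrow> Lt n k = 0"
  by (simp add: Lt_def fps_X_power_mult_nth)

lemma Lt_diag: "Lt n n = 1"
  by (simp add: Lt_def fps_X_power_mult_nth fps_nth_power_0 F0)

lemma Lt_0: "Lt 0 k = (if k = 0 then 1 else 0)"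
  using Lt_zero[of 0 k] Lt_diag[of 0] by auto

lemma col_rec: "fps_X ^ k * motzkin_F ^ Suc k =
   (if k = 0 then 1 else fps_X * (fps_X ^ (k-1) * motzkin_F ^ k))
   + fps_X * (fps_X ^ k * motzkin_F ^ Suc k) + fps_X * (fps_X ^ Suc k * motzkin_F ^ Suc (Suc k))"
proof (cases k)
  case 0
  let ?F = motzkin_F and ?X = "fps_X :: rat fps"
  have "(if k = 0 then 1 else fps_X * (fps_X ^ (k-1) * motzkin_F ^ k))
   + fps_X * (fps_X ^ k * motzkin_F ^ Suc k) + fps_X * (fps_X ^ Suc k * motzkin_F ^ Suc (Suc k))
    = 1 + ?X * ?F + ?X ^ 2 * ?F ^ 2" by (simp add: 0 algebra_simps power2_eq_square)
  also have "\<dots> = ?F" by (rule F_func[symmetric])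
  finally show ?thesis by (simp add: 0)
next
  case (Suc j)
  let ?F = motzkin_F and ?X = "fps_X :: rat fps"
  have "(if k = 0 then 1 else fps_X * (fps_X ^ (k-1) * motzkin_F ^ k))
   + fps_X * (fps_X ^ k * motzkin_F ^ Suc k) + fps_X * (fps_X ^ Suc k * motzkin_F ^ Suc (Suc k))
    = (?X ^ k * ?F ^ k) * (1 + ?X * ?F + ?X ^ 2 * ?F ^ 2)" by (simp add: Suc algebra_simps power2_eq_square)
  also have "\<dots> = (?X ^ k * ?F ^ k) * ?F" by (simp only: F_func[symmetric])
  finally show ?thesis by (simp add: algebra_simps)
qed

lemma Lt_rec: "Lt (Suc n) k = (if k = 0 then 0 else Lt n (k-1)) + Lt n k + Lt n (Suc k)"
proof -
  have "Lt (Suc n) k = fps_nth (fps_X ^ k * motzkin_F ^ Suc k) (Suc n)" by (simp add: Lt_def)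
  also have "\<dots> = fps_nth ((if k = 0 then 1 else fps_X * (fps_X ^ (k-1) * motzkin_F ^ k))
   + fps_X * (fps_X ^ k * motzkin_F ^ Suc k) + fps_X * (fps_X ^ Suc k * motzkin_F ^ Suc (Suc k))) (Suc n)"
    by (subst col_rec, rule refl)
  also have "\<dots> = (if k = 0 then 0 else Lt n (k-1)) + Lt n k + Lt n (Suc k)"
    by (cases k) (simp_all add: Lt_def)
  finally show ?thesis .
qed

lemma powcoeff_Lt: "powcoeff motzkin_F 2 m = (if m < 0 then 0 else Lt (Suc (nat m)) 1)"
  by (simp add: powcoeff_def Lt_def power2_eq_square)

definition Ssum :: "nat \<Rightarrow> (nat \<Rightarrow> rat) \<Rightarrow> rat" where
  "Ssum i v = (\<Sum>k<Suc i. Lt i k * v k)"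

definition Top :: "(nat \<Rightarrow> rat) \<Rightarrow> nat \<Rightarrow> rat" where
  "Top v k = (if k = 0 then 0 else v (k-1)) + v k + v (Suc k)"

lemma Ssum_ext: "i < K \<Longrightarrow> (\<Sum>k<K. Lt i k * v k) = Ssum i v"
  unfolding Ssum_def
  by (rule sum.mono_neutral_right) (auto simp: Lt_zero)

lemma Ssum_Suc: "Ssum (Suc i) v = Ssum i (Top v)"
proof -
  let ?K = "Suc (Suc i)"
  have "Ssum (Suc i) v = (\<Sum>k<?K. ((if k = 0 then 0 else Lt i (k-1)) + Lt i k + Lt i (Suc k)) * v k)"
    by (simp add: Ssum_def Lt_rec del: sum.lessThan_Suc)
  also have "\<dots> = (\<Sum>k<?K. (if k = 0 then 0 else Lt i (k-1)) * v k) + (\<Sum>k<?K. Lt i k * v k)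
        + (\<Sum>k<?K. Lt i (Suc k) * v k)"
    by (simp add: sum.distrib algebra_simps del: sum.lessThan_Suc)
  also have "(\<Sum>k<?K. (if k = 0 then 0 else Lt i (k-1)) * v k) = (\<Sum>k<Suc i. Lt i k * v (Suc k))"
    by (subst sum.lessThan_Suc_shift) simp
  also have "(\<Sum>k<?K. Lt i k * v k) = (\<Sum>k<Suc i. Lt i k * v k)"
    by (rule Ssum_ext[unfolded Ssum_def]) simp
  also have "(\<Sum>k<?K. Lt i (Suc k) * v k) = (\<Sum>k<Suc i. Lt i k * (if k = 0 then 0 else v (k-1)))"
  proof -
    have "(\<Sum>k<?K. Lt i (Suc k) * v k) = (\<Sum>k<i. Lt i (Suc k) * v k)"
      by (simp add: Lt_zero)
    also have "\<dots> = (\<Sum>k<Suc i. Lt i k * (if k = 0 then 0 else v (k-1)))"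
      by (subst sum.lessThan_Suc_shift) simp
    finally show ?thesis .
  qed
  finally show ?thesis
    by (simp add: Ssum_def Top_def sum.distrib algebra_simps del: sum.lessThan_Suc)
qed

definition w1 :: "nat \<Rightarrow> nat \<Rightarrow> rat" where
  "w1 j k = (if k = 0 then 0 else Lt j (k-1)) + Lt j (Suc k)"

lemma Top_w1: "Top (w1 j) = w1 (Suc j)"
proof
  fix k show "Top (w1 j) k = w1 (Suc j) k"
    by (cases k; cases "k - 1") (auto simp: Top_def w1_def Lt_rec)
qed

lemma Ssum_0: "Ssum 0 v = v 0" by (simp add: Ssum_def Lt_0)

lemma Ssum_w1: "Ssum i (w1 j) = Lt (i + j) 1"
proof (induction i arbitrary: j)
  case 0 thus ?case by (simp add: Ssum_0 w1_def)
next
  case (Suc i) thus ?case by (simp add: Ssum_Suc Top_w1)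
qed


definition cc :: "nat \<Rightarrow> rat" where
  "cc k = (if k mod 3 = 2 then 1 else if k mod 3 = 0 \<and> k > 0 then -1 else 0)"
definition dd :: "nat \<Rightarrow> rat" where
  "dd k = (if k mod 3 = 1 then - 2 * of_nat (k div 3) else of_nat (k div 3))"

lemma three_cases: fixes k :: nat obtains m where "k = 3*m" | m where "k = 3*m+1" | m where "k = 3*m+2"
proof -
  have "k = 3 * (k div 3) + k mod 3" by simp
  moreover have "k mod 3 = 0 \<or> k mod 3 = 1 \<or> k mod 3 = 2" by arith
  ultimately show ?thesis using that by fastforce
qed

lemma m3[simp]: "Suc (3*n) mod 3 = 1" "Suc (3*n) div 3 = n" "Suc (Suc (3*n)) mod 3 = 2" "Suc (Suc (3*n)) div 3 = n"
  "(3 + 3*n) mod 3 = 0" "(3 + 3*n) div 3 = Suc n" "(3*n) div 3 = n"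
  by presburger+

lemma Top_cc: "Top cc = (\<lambda>k. if k = 1 then 1 else 0)"
proof
  fix k show "Top cc k = (if k = 1 then 1 else 0)"
  proof (cases k rule: three_cases)
    case (1 m) thus ?thesis by (cases m) (auto simp: Top_def cc_def)
  next
    case (2 m) thus ?thesis by (cases m) (auto simp: Top_def cc_def)
  next
    case (3 m) thus ?thesis by (auto simp: Top_def cc_def)
  qed
qed

lemma Top_dd: "Top dd = cc"
proof
  fix k show "Top dd k = cc k"
  proof (cases k rule: three_cases)
    case (1 m) thus ?thesis by (cases m) (auto simp: Top_def cc_def dd_def)
  next
    case (2 m) thus ?thesis by (auto simp: Top_def cc_def dd_def)
  next
    case (3 m) thus ?thesis by (auto simp: Top_def cc_def dd_def)
  qed
qed

lemma Ssum_e1: "Ssum i (\<lambda>k. if k = 1 then 1 else 0) = Lt i 1"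
proof -
  have "Ssum i (\<lambda>k. if k = 1 then 1 else 0) = (\<Sum>k\<in>{..<Suc i}. if k = 1 then Lt i 1 else 0)"
    unfolding Ssum_def by (rule sum.cong) auto
  also have "\<dots> = (if 1 \<in> {..<Suc i} then Lt i 1 else 0)" by (rule sum.delta) simp
  also have "\<dots> = Lt i 1" using Lt_0 by auto
  finally show ?thesis .
qed

lemma Ssum_e1': "Ssum i (\<lambda>k. if k = Suc 0 then 1 else 0) = Lt i (Suc 0)"
  using Ssum_e1 by simp

lemma Ssum_cc: "Ssum i cc = (if i = 0 then 0 else Lt (i-1) 1)"
  by (cases i) (simp_all add: Ssum_0 cc_def Ssum_Suc Top_cc Ssum_e1 Ssum_e1' del: One_nat_def)

lemma Ssum_dd: "Ssum i dd = (if i = 0 then 0 else Ssum (i-1) cc)"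
  by (cases i) (simp_all add: Ssum_0 dd_def Ssum_Suc Top_dd)


lemma prod_list_ones: "(\<And>x. x \<in> set xs \<Longrightarrow> x = 1) \<Longrightarrow> prod_list xs = (1::rat)"
  by (induction xs) auto

lemma det_unitri:
  assumes "\<And>j l. j < l \<Longrightarrow> Q j l = 0" "\<And>j. Q j j = 1"
  shows "det (mat N N (\<lambda>(i,j). Q i j) :: rat mat) = 1"
  by (subst det_lower_triangular[of N]) (auto simp: assms diag_mat_def intro!: prod_list_ones)

lemma det_factor:
  fixes h X Q :: "nat \<Rightarrow> nat \<Rightarrow> rat"
  assumes h: "\<And>i j. i < N \<Longrightarrow> j < N \<Longrightarrow> h i j = (\<Sum>k<N. Lt i k * (\<Sum>l<N. X k l * Q j l))"
  and Q: "\<And>j l. j < l \<Longrightarrow> Q j l = 0" "\<And>j. Q j j = 1"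
  shows "det (mat N N (\<lambda>(i,j). h i j)) = det (mat N N (\<lambda>(k,l). X k l))"
proof -
  let ?L = "mat N N (\<lambda>(i,k). Lt i k)" and ?X = "mat N N (\<lambda>(k,l). X k l)"
    and ?Q = "mat N N (\<lambda>(i,j). Q i j)"
  have eq: "mat N N (\<lambda>(i,j). h i j) = ?L * (?X * transpose_mat ?Q)"
    by (rule eq_matI) (auto simp: h scalar_prod_def intro!: sum.cong)
  have "det (?L * (?X * transpose_mat ?Q)) = det ?L * (det ?X * det (transpose_mat ?Q))"
    by (subst det_mult[of _ N]) (auto intro!: arg_cong2[where f="(*)"] det_mult)
  moreover have "det ?L = 1" by (rule det_unitri) (auto simp: Lt_zero Lt_diag)
  moreover have "det (transpose_mat ?Q) = 1"
    by (subst det_transpose[of _ N]) (auto intro: det_unitri Q)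
  ultimately show ?thesis using eq by simp
qed

definition JMf :: "nat \<Rightarrow> nat \<Rightarrow> rat" where
  "JMf k l = (if k = Suc l \<or> l = Suc k then 1 else 0)"

definition Xg :: "(nat \<Rightarrow> rat) \<Rightarrow> nat \<Rightarrow> nat \<Rightarrow> rat" where
  "Xg v k l = (if l = 0 then v k else if k = l \<or> k + 2 = l then 1 else 0)"

definition X3 :: "nat \<Rightarrow> nat \<Rightarrow> rat" where
  "X3 k l = (if l = 0 then dd k else if l = 1 then cc k else if k + 1 = l \<or> k + 3 = l then 1 else 0)"

definition Q2 :: "nat \<Rightarrow> nat \<Rightarrow> rat" where
  "Q2 j l = (if j = 0 then (if l = 0 then 1 else 0) else if l = 0 then 0 else Lt (j-1) (l-1))"

definition Q3 :: "nat \<Rightarrow> nat \<Rightarrow> rat" where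
  "Q3 j l = (if j < 2 then (if l = j then 1 else 0) else if l < 2 then 0 else Lt (j-2) (l-2))"

lemma sum1: "(\<Sum>l<(N::nat). (if l = a then A else 0)) = (if a < N then (A::rat) else 0)"
proof -
  have "(\<Sum>l\<in>{..<N}. if l = a then A else 0) = (if a \<in> {..<N} then A else 0)" by (rule sum.delta[OF finite_lessThan])
  thus ?thesis by (simp only: lessThan_iff)
qed

lemma sum2: "(\<Sum>l<(N::nat). (if l = a then A else 0) + (if l = b then B else 0)) =
   (if a < N then A else 0) + (if b < N then (B::rat) else 0)"
  by (simp only: sum.distrib sum1)

lemma powcoeff_m1: "powcoeff motzkin_F 2 (int t - 1) = Lt t 1"
  by (cases t) (auto simp: powcoeff_Lt Lt_0)

lemma inner1: assumes "j < N" "k < N"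
  shows "(\<Sum>l<N. JMf k l * Lt j l) = w1 j k"
proof -
  have "(\<Sum>l<N. JMf k l * Lt j l) = (\<Sum>l<N. (if l = k - 1 then (if k > 0 then Lt j (k-1) else 0) else 0)
     + (if l = Suc k then Lt j (Suc k) else 0))"
    by (rule sum.cong) (auto simp: JMf_def)
  also have "\<dots> = w1 j k" unfolding sum2 using assms by (auto simp: w1_def Lt_zero)
  finally show ?thesis .
qed

lemma inner2: assumes "j < N" "k < N"
  shows "(\<Sum>l<N. Xg cc k l * Q2 j l) = (if j = 0 then cc k else w1 (j-1) k)"
proof (cases "j = 0")
  case True
  have "(\<Sum>l<N. Xg cc k l * Q2 j l) = (\<Sum>l<N. (if l = 0 then cc k else 0))"
    using True by (intro sum.cong) (auto simp: Xg_def Q2_def)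
  thus ?thesis using assms True by (simp only: sum1) auto
next
  case False
  have "(\<Sum>l<N. Xg cc k l * Q2 j l) = (\<Sum>l<N. (if l = k then (if k > 0 then Lt (j-1) (k-1) else 0) else 0)
     + (if l = k + 2 then Lt (j-1) (Suc k) else 0))"
    by (rule sum.cong) (use False in \<open>auto simp: Xg_def Q2_def\<close>)
  also have "\<dots> = w1 (j-1) k" unfolding sum2 using assms by (auto simp: w1_def Lt_zero)
  finally show ?thesis using False by simp
qed

lemma inner3: assumes "j < N" "k < N"
  shows "(\<Sum>l<N. X3 k l * Q3 j l) = (if j = 0 then dd k else if j = 1 then cc k else w1 (j-2) k)"
proof (cases "j < 2")
  case True
  have "(\<Sum>l<N. X3 k l * Q3 j l) = (\<Sum>l<N. (if l = j then (if j = 0 then dd k else cc k) else 0))"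
    using True by (intro sum.cong) (auto simp: X3_def Q3_def)
  thus ?thesis using assms True by (simp only: sum1) auto
next
  case False
  have "(\<Sum>l<N. X3 k l * Q3 j l) = (\<Sum>l<N. (if l = k + 1 then (if k > 0 then Lt (j-2) (k-1) else 0) else 0)
     + (if l = k + 3 then Lt (j-2) (Suc k) else 0))"
    by (rule sum.cong) (use False in \<open>auto simp: X3_def Q3_def\<close>)
  also have "\<dots> = w1 (j-2) k" unfolding sum2 using assms False by (auto simp: w1_def Lt_zero)
  finally show ?thesis using False by simp
qed

lemma outer: assumes "i < N" shows "(\<Sum>k<N. Lt i k * v k) = Ssum i v"
  using Ssum_ext assms by blast

lemma hank1: "hankelD motzkin_F 2 (-1) N = det (mat N N (\<lambda>(k,l). JMf k l))"
  unfolding hankelD_def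
proof (rule det_factor[where Q = Lt])
  fix i j assume ij: "i < N" "j < N"
  have "(\<Sum>k<N. Lt i k * (\<Sum>l<N. JMf k l * Lt j l)) = (\<Sum>k<N. Lt i k * w1 j k)"
    using ij inner1 by (auto intro!: sum.cong)
  also have "\<dots> = Lt (i + j) 1" using ij by (simp add: outer Ssum_w1)
  finally show "powcoeff motzkin_F 2 (int i + int j + - 1) = (\<Sum>k<N. Lt i k * (\<Sum>l<N. JMf k l * Lt j l))"
    using powcoeff_m1[of "i+j"] by simp
qed (auto simp: Lt_zero Lt_diag)
lemma powcoeff_m2: "powcoeff motzkin_F 2 (int t - 2) = (if t = 0 then 0 else Lt (t-1) 1)"
proof (cases t)
  case (Suc s)
  hence "int t - 2 = int s - 1" by simp
  thus ?thesis using powcoeff_m1[of s] Suc by simp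
qed (simp add: powcoeff_Lt)

lemma powcoeff_m3: "powcoeff motzkin_F 2 (int t - 3) = (if t < 2 then 0 else Lt (t-2) 1)"
proof (cases t)
  case (Suc s)
  hence "int t - 3 = int s - 2" by simp
  thus ?thesis using powcoeff_m2[of s] Suc by auto
qed (simp add: powcoeff_Lt)

lemma hank2: "hankelD motzkin_F 2 (-2) N = det (mat N N (\<lambda>(k,l). Xg cc k l))"
  unfolding hankelD_def
proof (rule det_factor[where Q = Q2])
  fix i j assume ij: "i < N" "j < N"
  have "(\<Sum>k<N. Lt i k * (\<Sum>l<N. Xg cc k l * Q2 j l)) =
     (\<Sum>k<N. Lt i k * (if j = 0 then cc k else w1 (j-1) k))"
    using ij inner2 by (auto intro!: sum.cong)
  also have "\<dots> = (if j = 0 then Ssum i cc else Ssum i (w1 (j-1)))" using ij by (simp add: outer)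
  also have "\<dots> = (if i + j = 0 then 0 else Lt (i + j - 1) 1)"
    by (auto simp: Ssum_w1 Ssum_cc)
  also have "\<dots> = powcoeff motzkin_F 2 (int (i + j) - 2)" by (rule powcoeff_m2[symmetric])
  finally show "powcoeff motzkin_F 2 (int i + int j + - 2) = (\<Sum>k<N. Lt i k * (\<Sum>l<N. Xg cc k l * Q2 j l))"
    by simp
qed (auto simp: Q2_def Lt_zero Lt_diag)

lemma hank3: "hankelD motzkin_F 2 (-3) N = det (mat N N (\<lambda>(k,l). X3 k l))"
  unfolding hankelD_def
proof (rule det_factor[where Q = Q3])
  fix i j assume ij: "i < N" "j < N"
  have "(\<Sum>k<N. Lt i k * (\<Sum>l<N. X3 k l * Q3 j l)) =
     (\<Sum>k<N. Lt i k * (if j = 0 then dd k else if j = 1 then cc k else w1 (j-2) k))"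
    using ij inner3 by (auto intro!: sum.cong)
  also have "\<dots> = (if j = 0 then Ssum i dd else if j = 1 then Ssum i cc else Ssum i (w1 (j-2)))" using ij by (simp add: outer)
  also have "\<dots> = (if i + j < 2 then 0 else Lt (i + j - 2) 1)"
    by (auto simp: Ssum_w1 Ssum_cc Ssum_dd numeral_2_eq_2)
  also have "\<dots> = powcoeff motzkin_F 2 (int (i + j) - 3)" by (rule powcoeff_m3[symmetric])
  finally show "powcoeff motzkin_F 2 (int i + int j + - 3) = (\<Sum>k<N. Lt i k * (\<Sum>l<N. X3 k l * Q3 j l))"
    by simp
qed (auto simp: Q3_def Lt_zero Lt_diag)


lemma det_last_row:
  "det (mat (Suc n) (Suc n) (\<lambda>(i,j). f i j)) =
   (\<Sum>j<Suc n. f n j * ((-1)^(n+j) * det (mat n n (\<lambda>(i,j'). f i (if j' < j then j' else Suc j')))))"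
proof -
  let ?A = "mat (Suc n) (Suc n) (\<lambda>(i,j). f i j)"
  have "det ?A = (\<Sum>j<Suc n. ?A $$ (n,j) * cofactor ?A n j)"
    by (rule laplace_expansion_row) auto
  also have "\<dots> = (\<Sum>j<Suc n. f n j * ((-1)^(n+j) * det (mat n n (\<lambda>(i,j'). f i (if j' < j then j' else Suc j')))))"
  proof (rule sum.cong[OF refl])
    fix j assume "j \<in> {..<Suc n}"
    have "mat_delete ?A n j = mat n n (\<lambda>(i,j'). f i (if j' < j then j' else Suc j'))"
      unfolding mat_delete_def by (rule eq_matI) auto
    thus "?A $$ (n,j) * cofactor ?A n j = f n j * ((-1)^(n+j) * det (mat n n (\<lambda>(i,j'). f i (if j' < j then j' else Suc j'))))"
      using \<open>j \<in> _\<close> by (simp add: cofactor_def)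
  qed
  finally show ?thesis .
qed

lemma det_last_col:
  "det (mat (Suc n) (Suc n) (\<lambda>(i,j). f i j)) =
   (\<Sum>i<Suc n. f i n * ((-1)^(i+n) * det (mat n n (\<lambda>(i',j). f (if i' < i then i' else Suc i') j))))"
proof -
  let ?A = "mat (Suc n) (Suc n) (\<lambda>(i,j). f i j)"
  have "det ?A = (\<Sum>i<Suc n. ?A $$ (i,n) * cofactor ?A i n)"
    by (rule laplace_expansion_column) auto
  also have "\<dots> = (\<Sum>i<Suc n. f i n * ((-1)^(i+n) * det (mat n n (\<lambda>(i',j). f (if i' < i then i' else Suc i') j))))"
  proof (rule sum.cong[OF refl])
    fix i assume "i \<in> {..<Suc n}"
    have "mat_delete ?A i n = mat n n (\<lambda>(i',j). f (if i' < i then i' else Suc i') j)"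
      unfolding mat_delete_def by (rule eq_matI) auto
    thus "?A $$ (i,n) * cofactor ?A i n = f i n * ((-1)^(i+n) * det (mat n n (\<lambda>(i',j). f (if i' < i then i' else Suc i') j)))"
      using \<open>i \<in> _\<close> by (simp add: cofactor_def)
  qed
  finally show ?thesis .
qed

lemma sum_single: "finite S \<Longrightarrow> a \<in> S \<Longrightarrow> (\<And>j. j \<in> S \<Longrightarrow> j \<noteq> a \<Longrightarrow> g j = 0) \<Longrightarrow> sum g S = (g a :: rat)"
  by (subst sum.remove[of S a]) (auto intro!: sum.neutral)

lemma sum_two: "finite S \<Longrightarrow> a \<in> S \<Longrightarrow> b \<in> S \<Longrightarrow> a \<noteq> b \<Longrightarrow>
   (\<And>j. j \<in> S \<Longrightarrow> j \<noteq> a \<Longrightarrow> j \<noteq> b \<Longrightarrow> g j = 0) \<Longrightarrow> sum g S = (g a + g b :: rat)"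
  apply (subst sum.remove[of S a], assumption, assumption)
  apply (subst sum.remove[of "S - {a}" b], simp, simp)
  apply (subst sum.neutral[of "S - {a} - {b}"])
  apply auto
  done

abbreviation "JM n \<equiv> mat n n (\<lambda>(k,l). JMf k l)"

lemma det_JM_SS: "det (JM (Suc (Suc n))) = - det (JM n)"
proof -
  let ?M = "mat (Suc n) (Suc n) (\<lambda>(i,j'). JMf i (if j' < n then j' else Suc j'))"
  have "det (JM (Suc (Suc n))) = (\<Sum>j<Suc (Suc n). JMf (Suc n) j * ((-1)^(Suc n+j) *
      det (mat (Suc n) (Suc n) (\<lambda>(i,j'). JMf i (if j' < j then j' else Suc j')))))"
    by (rule det_last_row)
  also have "\<dots> = JMf (Suc n) n * ((-1)^(Suc n+n) * det ?M)"
    by (rule sum_single) (auto simp: JMf_def)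
  also have "\<dots> = - det ?M" by (simp add: JMf_def)
  also have "det ?M = (\<Sum>i<Suc n. JMf i (if n < n then n else Suc n) * ((-1)^(i+n) *
     det (mat n n (\<lambda>(i',j). JMf (if i' < i then i' else Suc i') (if j < n then j else Suc j)))))"
    by (rule det_last_col)
  also have "\<dots> = JMf n (Suc n) * ((-1)^(n+n) *
     det (mat n n (\<lambda>(i',j). JMf (if i' < n then i' else Suc i') (if j < n then j else Suc j))))"
    by (subst sum_single[where a=n]) (auto simp: JMf_def)
  also have "mat n n (\<lambda>(i',j). JMf (if i' < n then i' else Suc i') (if j < n then j else Suc j)) = JM n"
    by (rule eq_matI) auto
  finally show ?thesis by (simp add: JMf_def)
qed

lemma det_JM_0: "det (JM 0) = 1" by simp

lemma det_JM_1: "det (JM 1) = 0"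
  using det_last_row[of 0 JMf] by (simp add: JMf_def)

lemma det_Xg_1: "det (mat 1 1 (\<lambda>(k,l). Xg v k l)) = v 0"
  using det_last_row[of 0 "Xg v"] by (simp add: Xg_def)

lemma det_Xg_Suc: assumes "n \<ge> 1"
  shows "det (mat (Suc n) (Suc n) (\<lambda>(k,l). Xg v k l)) =
     det (mat n n (\<lambda>(k,l). Xg v k l)) + (-1)^n * v n * det (JM n)"
proof -
  have "det (mat (Suc n) (Suc n) (\<lambda>(k,l). Xg v k l)) = (\<Sum>j<Suc n. Xg v n j * ((-1)^(n+j) *
      det (mat n n (\<lambda>(i,j'). Xg v i (if j' < j then j' else Suc j')))))"
    by (rule det_last_row)
  also have "\<dots> = Xg v n 0 * ((-1)^(n+0) * det (mat n n (\<lambda>(i,j'). Xg v i (if j' < 0 then j' else Suc j'))))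
     + Xg v n n * ((-1)^(n+n) * det (mat n n (\<lambda>(i,j'). Xg v i (if j' < n then j' else Suc j'))))"
    by (rule sum_two) (use assms in \<open>auto simp: Xg_def\<close>)
  also have "mat n n (\<lambda>(i,j'). Xg v i (if j' < 0 then j' else Suc j')) = JM n"
    by (rule eq_matI) (auto simp: Xg_def JMf_def)
  also have "mat n n (\<lambda>(i,j'). Xg v i (if j' < n then j' else Suc j')) = mat n n (\<lambda>(k,l). Xg v k l)"
    by (rule eq_matI) auto
  finally show ?thesis using assms by (simp add: Xg_def algebra_simps)
qed

lemma det_X3_Suc: assumes "n \<ge> 1"
  shows "det (mat (Suc n) (Suc n) (\<lambda>(k,l). X3 k l)) =
     (-1)^n * (dd n * det (mat n n (\<lambda>(k,l). Xg cc k l)) - cc n * det (mat n n (\<lambda>(k,l). Xg dd k l)))"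
proof -
  have "det (mat (Suc n) (Suc n) (\<lambda>(k,l). X3 k l)) = (\<Sum>j<Suc n. X3 n j * ((-1)^(n+j) *
      det (mat n n (\<lambda>(i,j'). X3 i (if j' < j then j' else Suc j')))))"
    by (rule det_last_row)
  also have "\<dots> = X3 n 0 * ((-1)^(n+0) * det (mat n n (\<lambda>(i,j'). X3 i (if j' < 0 then j' else Suc j'))))
     + X3 n 1 * ((-1)^(n+1) * det (mat n n (\<lambda>(i,j'). X3 i (if j' < 1 then j' else Suc j'))))"
    by (rule sum_two) (use assms in \<open>auto simp: X3_def\<close>)
  also have "mat n n (\<lambda>(i,j'). X3 i (if j' < 0 then j' else Suc j')) = mat n n (\<lambda>(k,l). Xg cc k l)"
    by (rule eq_matI) (auto simp: Xg_def X3_def)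
  also have "mat n n (\<lambda>(i,j'). X3 i (if j' < 1 then j' else Suc j')) = mat n n (\<lambda>(k,l). Xg dd k l)"
    by (rule eq_matI) (auto simp: Xg_def X3_def)
  finally show ?thesis using assms by (simp add: X3_def algebra_simps)
qed


definition jv :: "nat \<Rightarrow> rat" where
  "jv n = (if odd n then 0 else if n mod 4 = 0 then 1 else -1)"

lemma det_JM: "det (JM n) = jv n"
proof (induction n rule: less_induct)
  case (less n)
  show ?case
  proof (cases n)
    case 0 thus ?thesis by (simp add: jv_def)
  next
    case (Suc m) note m = this
    show ?thesis
    proof (cases m)
      case 0 thus ?thesis using det_JM_1 m by (simp add: jv_def)
    next
      case (Suc p)
      have "det (JM n) = - jv p" using det_JM_SS[of p] less[of p] m Suc by simp
      moreover have "jv (Suc (Suc p)) = - jv p"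
      proof -
        have e: "even p \<Longrightarrow> (Suc (Suc p) mod 4 = 0) = (p mod 4 \<noteq> 0)" by presburger
        show ?thesis unfolding jv_def using e by auto
      qed
      ultimately show ?thesis using m Suc by simp
    qed
  qed
qed

lemma red12:
  fixes n :: nat
  shows "n mod 3 = (n mod 12) mod 3" "n div 3 = 4 * (n div 12) + (n mod 12) div 3"
    "n mod 4 = (n mod 12) mod 4" "even n = even (n mod 12)"
    "Suc n mod 12 = (if n mod 12 = 11 then 0 else Suc (n mod 12))"
    "Suc n div 12 = (if n mod 12 = 11 then Suc (n div 12) else n div 12)"
proof -
  show "n mod 3 = (n mod 12) mod 3" by (simp add: mod_mod_cancel)
  show "n mod 4 = (n mod 12) mod 4" by (simp add: mod_mod_cancel)
  show "even n = even (n mod 12)" by (metis dvd_mod_iff dvd_trans even_numeral numeral_Bit0_eq_double)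
  have "n = n mod 12 + 3 * (4 * (n div 12))" by simp
  hence "n div 3 = (n mod 12 + 3 * (4 * (n div 12))) div 3" by simp
  thus "n div 3 = 4 * (n div 12) + (n mod 12) div 3" by (simp only: div_mult_self2)
  show "Suc n mod 12 = (if n mod 12 = 11 then 0 else Suc (n mod 12))" by (simp add: mod_Suc)
  show "Suc n div 12 = (if n mod 12 = 11 then Suc (n div 12) else n div 12)" by (auto simp add: div_Suc mod_Suc)
qed

lemma m1pow: "(-1::rat)^n = (if even n then 1 else -1)" by simp

lemma cases12: "(r::nat) < 12 \<Longrightarrow> r = 0 \<or> r = 1 \<or> r = 2 \<or> r = 3 \<or> r = 4 \<or> r = 5 \<or> r = 6 \<or> r = 7 \<or> r = 8 \<or> r = 9 \<or> r = 10 \<or> r = 11"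
  by arith

definition x2c :: "nat \<Rightarrow> rat" where
  "x2c n = (if n mod 12 \<in> {0, 9, 10, 11} then 1 else if n mod 12 \<in> {1, 2, 7, 8} then 0 else -1)"

definition yc :: "nat \<Rightarrow> rat" where
  "yc n = (let q = of_nat (n div 12); r = n mod 12 in
     if r = 0 then 4*q else if r \<in> {1,2} then 8*q else if r \<in> {3,4} then 4*q
     else if r \<in> {5,6,9,10} then -4*q-2 else if r \<in> {7,8} then -8*q-4 else 4*q+4)"

lemma x2c_step: assumes "n > 0" shows "x2c (Suc n) = x2c n + (-1)^n * cc n * jv n"
proof -
  have r: "n mod 12 < 12" by simp
  show ?thesis unfolding x2c_def cc_def jv_def m1pow red12(1,3,4,5)[of n]
    using cases12[OF r] assms by (elim disjE) simp_all
qed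

lemma yc_step: "yc (Suc n) = yc n + (-1)^n * dd n * jv n"
proof -
  have r: "n mod 12 < 12" by simp
  show ?thesis unfolding yc_def dd_def jv_def m1pow red12[of n] Let_def
    using cases12[OF r] by (elim disjE) (simp_all add: algebra_simps)
qed


lemma det_x2: "det (mat n n (\<lambda>(k,l). Xg cc k l)) = x2c n"
proof (induction n)
  case 0 thus ?case by (simp add: x2c_def)
next
  case (Suc n)
  show ?case
  proof (cases "n = 0")
    case True thus ?thesis using det_Xg_1[of cc] cc_def[of 0] by (simp add: x2c_def)
  next
    case False
    thus ?thesis using det_Xg_Suc[of n cc] Suc.IH det_JM[of n] x2c_step[of n] by simp
  qed
qed

lemma det_y: "n \<ge> 1 \<Longrightarrow> det (mat n n (\<lambda>(k,l). Xg dd k l)) = yc n"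
proof (induction n)
  case 0 thus ?case by simp
next
  case (Suc n)
  show ?case
  proof (cases "n = 0")
    case True thus ?thesis using det_Xg_1[of dd] dd_def[of 0] by (simp add: yc_def)
  next
    case False
    thus ?thesis using det_Xg_Suc[of n dd] Suc.IH det_JM[of n] yc_step[of n] by simp
  qed
qed

lemma part1: "hankelD motzkin_F 2 (-1) n = (if n mod 4 = 0 then 1 else if n mod 4 = 2 then -1 else 0)"
proof -
  have "odd n \<longleftrightarrow> n mod 4 = 1 \<or> n mod 4 = 3" by presburger
  thus ?thesis unfolding hank1 det_JM jv_def by auto
qed

lemma part2: "hankelD motzkin_F 2 (-2) n = (if n mod 12 \<in> {0, 9, 10, 11} then 1
             else if n mod 12 \<in> {1, 2, 7, 8} then 0 else -1)"
  unfolding hank2 det_x2 x2c_def by simp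

lemma part3: assumes "n \<ge> 4"
  shows "(let k = n div 12; r = n mod 12 in
             hankelD motzkin_F 2 (-3) n =
              (if r \<in> {0, 4} then 1
               else if r \<in> {2, 8} then 0
               else if r \<in> {6, 10} then -1
               else if r = 1 then 8 * of_nat k
               else if r = 3 then - 8 * of_nat k
               else if r = 5 then 8 * of_nat k + 2
               else if r = 7 then - 8 * of_nat k - 4
               else if r = 9 then 8 * of_nat k + 4
               else - 8 * of_nat k - 6))"
proof -
  obtain m where n: "n = Suc m" and m: "m \<ge> 1" using assms by (cases n) auto
  have "hankelD motzkin_F 2 (-3) n = (-1)^m * (dd m * x2c m - cc m * yc m)"
    unfolding hank3 n using det_X3_Suc[OF m] det_x2[of m] det_y[OF m] by simp
  moreover have r: "m mod 12 < 12" by simp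
  ultimately show ?thesis unfolding n Let_def
    unfolding yc_def x2c_def dd_def cc_def m1pow red12[of m] Let_def
    using cases12[OF r] m by (elim disjE) (simp_all add: algebra_simps)
qed

theorem proposition4p3:
  shows "(\<forall>n. hankelD motzkin_F 2 (-1) n =
            (if n mod 4 = 0 then 1 else if n mod 4 = 2 then -1 else 0))
       \<and> (\<forall>n. hankelD motzkin_F 2 (-2) n =
            (if n mod 12 \<in> {0, 9, 10, 11} then 1
             else if n mod 12 \<in> {1, 2, 7, 8} then 0 else -1))
       \<and> (\<forall>n. n \<ge> 4 \<longrightarrow>
            (let k = n div 12; r = n mod 12 in
             hankelD motzkin_F 2 (-3) n =
              (if r \<in> {0, 4} then 1
               else if r \<in> {2, 8} then 0
               else if r \<in> {6, 10} then -1
               else if r = 1 then 8 * of_nat k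
               else if r = 3 then - 8 * of_nat k
               else if r = 5 then 8 * of_nat k + 2
               else if r = 7 then - 8 * of_nat k - 4
               else if r = 9 then 8 * of_nat k + 4
               else - 8 * of_nat k - 6)))"
  using part1 part2 part3 by blast
end
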